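(* Let $a<b$ be real numbers and let $d\geq 2$ be an integer. Then there exists an alphabet $\mathcal{A}\subset\mathbb{R}$ with $|\mathcal{A}|=2^d$ such that for every $N$ and every $y\in[a,b]^{N\times N}$, the matrices $q,u\in\mathbb{R}^{N\times N}$ generated by the two-dimensional first-order $\Sigma\Delta$ recursion with alphabet $\mathcal{A}$ satisfy: (i) $\|u\|_{\max}\leq C$ with $C=\frac{b-a}{2(2^d-3)}$; (ii) $u_{i,j}=u_{i,j-1}+u_{i-1,j}-u_{i-1,j-1}+y_{i,j}-q_{i,j}$ for all $i,j$ (with $u_{i,0}=u_{0,j}=u_{0,0}=0$), i.e. $DuD^T=y-q$; (iii) each $q_{i,j}$ depends only on $\{y_{i',j'}: i'\leq i,\ j'\leq j\}$.
   Context: For a finite alphabet $\mathcal{A}\subset\mathbb{R}$, $Q_{\mathcal{A}}(z)$ denotes an element of $\mathcal{A}$ nearest to $z$. The two-dimensional first-order $\Sigma\Delta$ recursion: given $y\in\mathbb{R}^{N\times N}$, set $u_{i,0}=u_{0,j}=u_{0,0}=0$ and for $i,j\ge 1$ (in an order such that all indices $(i',j')$ with $i'\le i$, $j'\le j$, $(i',j')\neq(i,j)$ are computed first) define $q_{i,j}=Q_{\mathcal{A}}(u_{i,j-1}+u_{i-1,j}-u_{i-1,j-1}+y_{i,j})$ and $u_{i,j}=u_{i,j-1}+u_{i-1,j}-u_{i-1,j-1}+y_{i,j}-q_{i,j}$ (for the first row and column this reduces to the one-dimensional first-order scheme). $D$ is the $N\times N$ matrix with $1$ on the diagonal, $-1$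 on the subdiagonal and $0$ elsewhere. $\|u\|_{\max}=\max_{i,j}|u_{i,j}|$. *)

theory Defs
  imports Complex_Main
begin

definition nearest_quantizer :: "real set \<Rightarrow> (real \<Rightarrow> real) \<Rightarrow> bool" where
  "nearest_quantizer A Q \<longleftrightarrow> (\<forall>z. Q z \<in> A \<and> (\<forall>x\<in>A. \<bar>z - Q z\<bar> \<le> \<bar>z - x\<bar>))"

text \<open>Two-dimensional first-order Sigma-Delta recursion. Matrices are indexed
  from 1; the state u has u(i,0) = u(0,j) = 0.\<close>
fun sd_u :: "(real \<Rightarrow> real) \<Rightarrow> (nat \<Rightarrow> nat \<Rightarrow> real) \<Rightarrow> nat \<Rightarrow> nat \<Rightarrow> real" where
  "sd_u Q y 0 j = 0"
| "sd_u Q y (Suc i) 0 = 0"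
| "sd_u Q y (Suc i) (Suc j) =
     (let w = sd_u Q y (Suc i) j + sd_u Q y i (Suc j) - sd_u Q y i j + y (Suc i) (Suc j)
      in w - Q w)"

definition sd_q :: "(real \<Rightarrow> real) \<Rightarrow> (nat \<Rightarrow> nat \<Rightarrow> real) \<Rightarrow> nat \<Rightarrow> nat \<Rightarrow> real" where
  "sd_q Q y i j = Q (sd_u Q y i (j - 1) + sd_u Q y (i - 1) j - sd_u Q y (i - 1) (j - 1) + y i j)"

end

theory Submission
  imports Defs
begin

lemma sd_u_local:
  "(\<forall>i' j'. 1 \<le> i' \<and> i' \<le> i \<and> 1 \<le> j' \<and> j' \<le> j \<longrightarrow> y' i' j' = y i' j') \<Longrightarrow>
   sd_u Q y' i j = sd_u Q y i j"
proof (induction Q y i j rule: sd_u.induct)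
  case (3 Q y i j)
  have a: "sd_u Q y' (Suc i) j = sd_u Q y (Suc i) j" using 3 by (intro 3(1)) auto
  have b: "sd_u Q y' i (Suc j) = sd_u Q y i (Suc j)" using 3 by (intro 3(2)) auto
  have c: "sd_u Q y' i j = sd_u Q y i j" using 3 by (intro 3(3)) auto
  have d: "y' (Suc i) (Suc j) = y (Suc i) (Suc j)" using 3(4) by auto
  show ?case by (simp add: a b c d Let_def)
qed auto

lemma sd_u_bound:
  assumes Q: "\<And>w. a - 3*C \<le> w \<Longrightarrow> w \<le> b + 3*C \<Longrightarrow> \<bar>w - Q w\<bar> \<le> C"
    and C: "C \<ge> 0"
    and y: "\<forall>i j. 1 \<le> i \<and> i \<le> N \<and> 1 \<le> j \<and> j \<le> N \<longrightarrow> y i j \<in> {a..b}"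
  shows "i \<le> N \<Longrightarrow> j \<le> N \<Longrightarrow> \<bar>sd_u Q y i j\<bar> \<le> C"
proof (induction i arbitrary: j)
  case 0
  then show ?case using C by simp
next
  case (Suc i)
  note outer = Suc
  show ?case using Suc.prems(2)
  proof (induction j)
    case 0
    then show ?case using C by simp
  next
    case (Suc j)
    have h1: "\<bar>sd_u Q y (Suc i) j\<bar> \<le> C" using Suc by simp
    have h2: "\<bar>sd_u Q y i (Suc j)\<bar> \<le> C" using outer Suc by simp
    have h3: "\<bar>sd_u Q y i j\<bar> \<le> C" using outer Suc by simp
    have h4: "y (Suc i) (Suc j) \<in> {a..b}" using y outer Suc by auto
    define w where "w = sd_u Q y (Suc i) j + sd_u Q y i (Suc j) - sd_u Q y i j + y (Suc i) (Suc j)"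
    have "a - 3*C \<le> w" "w \<le> b + 3*C" using h1 h2 h3 h4 unfolding w_def by auto
    then have "\<bar>w - Q w\<bar> \<le> C" by (rule Q)
    then show ?case by (simp add: w_def[symmetric] Let_def)
  qed
qed


lemma cover:
  fixes K :: nat and C a b w :: real
  assumes C: "C > 0" and K: "K \<ge> 1" and ba: "b - a = 2*C*(real K - 3)"
    and w1: "a - 3*C \<le> w" and w2: "w \<le> b + 3*C"
  shows "\<exists>k<K. \<bar>w - (a - 2*C + 2*C*real k)\<bar> \<le> C"
proof -
  define t where "t = (w - a + 2*C) / (2*C)"
  have t1: "t \<ge> -1/2" using w1 C by (simp add: t_def field_simps)
  have t2: "t \<le> real K - 1/2" using w2 C ba by (simp add: t_def field_simps)
  define m where "m = nat \<lfloor>t + 1/2\<rfloor>"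
  have m0: "real m \<le> t + 1/2" "t + 1/2 < real m + 1"
    using t1 by (simp_all add: m_def)
  have wt: "w = a - 2*C + 2*C*t" using C by (simp add: t_def field_simps)
  show ?thesis
  proof (cases "m < K")
    case True
    have "t - real m \<le> 1/2" "-(t - real m) \<le> 1/2" using m0 by linarith+
    then have "\<bar>t - real m\<bar> \<le> 1/2" by (simp only: abs_le_iff)
    moreover have "w - (a - 2*C + 2*C*real m) = (2*C) * (t - real m)" by (simp add: wt algebra_simps)
    moreover have "\<bar>(2*C) * (t - real m)\<bar> = (2*C) * \<bar>t - real m\<bar>" using C by (simp add: abs_mult)
    moreover have "(2*C) * \<bar>t - real m\<bar> \<le> (2*C) * (1/2)"
      by (rule mult_left_mono) (use C \<open>\<bar>t - real m\<bar> \<le> 1/2\<close> in auto)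
    ultimately have "\<bar>w - (a - 2*C + 2*C*real m)\<bar> \<le> C" by simp
    then show ?thesis using True by blast
  next
    case False
    then have "real m \<ge> real K" by simp
    then have tK: "t = real K - 1/2" using m0 t2 by linarith
    have "\<bar>w - (a - 2*C + 2*C*real (K-1))\<bar> \<le> C" using C K
      by (simp add: wt tK of_nat_diff algebra_simps)
    then show ?thesis using K by (intro exI[of _ "K-1"]) auto
  qed
qed

theorem proposition1:
  fixes a b :: real and d :: nat
  assumes "a < b" and "d \<ge> 2"
  shows "\<exists>A :: real set. finite A \<and> card A = 2 ^ d \<and>
    (\<forall>Q. nearest_quantizer A Q \<longrightarrow>
      (\<forall>(N::nat) (y :: nat \<Rightarrow> nat \<Rightarrow> real).
         (\<forall>i j. 1 \<le> i \<and> i \<le> N \<and> 1 \<le> j \<and> j \<le> N \<longrightarrow> y i j \<in> {a..b}) \<longrightarrow>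
         (\<forall>i j. i \<le> N \<and> j \<le> N \<longrightarrow>
            \<bar>sd_u Q y i j\<bar> \<le> (b - a) / (2 * (2 ^ d - 3))) \<and>
         (\<forall>i j. 1 \<le> i \<and> i \<le> N \<and> 1 \<le> j \<and> j \<le> N \<longrightarrow>
            sd_u Q y i j = sd_u Q y i (j - 1) + sd_u Q y (i - 1) j - sd_u Q y (i - 1) (j - 1)
                           + y i j - sd_q Q y i j) \<and>
         (\<forall>i j. 1 \<le> i \<and> i \<le> N \<and> 1 \<le> j \<and> j \<le> N \<longrightarrow>
            (\<forall>y' :: nat \<Rightarrow> nat \<Rightarrow> real.
               (\<forall>i' j'. 1 \<le> i' \<and> i' \<le> i \<and> 1 \<le> j' \<and> j' \<le> j \<longrightarrow> y' i' j' = y i' j') \<longrightarrow>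
               sd_q Q y' i j = sd_q Q y i j))))"
proof -
  define K :: nat where "K = 2 ^ d"
  define C :: real where "C = (b - a) / (2 * (2 ^ d - 3))"
  have "(2::nat) ^ 2 \<le> 2 ^ d" using assms(2) by (intro power_increasing) auto
  then have K4: "K \<ge> 4" by (simp add: K_def)
  have Kr: "(2::real) ^ d = real K" by (simp add: K_def)
  have K3: "real K - 3 > 0" using K4 by simp
  have Cpos: "C > 0" using assms(1) K3 by (simp add: C_def Kr)
  have ba: "b - a = 2*C*(real K - 3)" using K3 by (simp add: C_def Kr field_simps)
  define A where "A = (\<lambda>k. a - 2*C + 2*C*real k) ` {..<K}"
  have inj: "inj_on (\<lambda>k. a - 2*C + 2*C*real k) {..<K}"
    using Cpos by (auto simp: inj_on_def)
  have cardA: "card A = 2 ^ d" using inj by (simp add: A_def card_image K_def)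
  show ?thesis
  proof (rule exI[of _ A], intro conjI; (intro allI impI)?)
    show "finite A" by (simp add: A_def)
    show "card A = 2 ^ d" by (rule cardA)
  next
    fix Q :: "real \<Rightarrow> real" and N :: nat and y :: "nat \<Rightarrow> nat \<Rightarrow> real"
    assume nq: "nearest_quantizer A Q"
      and y: "\<forall>i j. 1 \<le> i \<and> i \<le> N \<and> 1 \<le> j \<and> j \<le> N \<longrightarrow> y i j \<in> {a..b}"
    have Qb: "\<bar>w - Q w\<bar> \<le> C" if w12: "a - 3*C \<le> w" "w \<le> b + 3*C" for w
    proof -
      obtain k where k: "k < K" "\<bar>w - (a - 2*C + 2*C*real k)\<bar> \<le> C"
        using cover[OF Cpos _ ba w12] K4 by auto
      have "a - 2*C + 2*C*real k \<in> A" using k(1) unfolding A_def by (intro imageI) simp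
      then have "\<bar>w - Q w\<bar> \<le> \<bar>w - (a - 2*C + 2*C*real k)\<bar>"
        using nq unfolding nearest_quantizer_def by blast
      then show ?thesis using k(2) by linarith
    qed
    have P1: "\<forall>i j. i \<le> N \<and> j \<le> N \<longrightarrow> \<bar>sd_u Q y i j\<bar> \<le> (b - a) / (2 * (2 ^ d - 3))"
      using sd_u_bound[OF Qb _ y] Cpos by (simp add: C_def)
    have P2: "\<forall>i j. 1 \<le> i \<and> i \<le> N \<and> 1 \<le> j \<and> j \<le> N \<longrightarrow>
            sd_u Q y i j = sd_u Q y i (j - 1) + sd_u Q y (i - 1) j - sd_u Q y (i - 1) (j - 1)
                           + y i j - sd_q Q y i j"
    proof (intro allI impI)
      fix i j :: nat assume "1 \<le> i \<and> i \<le> N \<and> 1 \<le> j \<and> j \<le> N"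
      then obtain i' j' where "i = Suc i'" "j = Suc j'" by (metis Suc_le_D One_nat_def)
      then show "sd_u Q y i j = sd_u Q y i (j - 1) + sd_u Q y (i - 1) j - sd_u Q y (i - 1) (j - 1)
                           + y i j - sd_q Q y i j" by (simp add: sd_q_def Let_def)
    qed
    have P3: "\<forall>i j. 1 \<le> i \<and> i \<le> N \<and> 1 \<le> j \<and> j \<le> N \<longrightarrow>
            (\<forall>y' :: nat \<Rightarrow> nat \<Rightarrow> real.
               (\<forall>i' j'. 1 \<le> i' \<and> i' \<le> i \<and> 1 \<le> j' \<and> j' \<le> j \<longrightarrow> y' i' j' = y i' j') \<longrightarrow>
               sd_q Q y' i j = sd_q Q y i j)"
    proof (intro allI impI)
      fix i j :: nat and y' :: "nat \<Rightarrow> nat \<Rightarrow> real"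
      assume ij: "1 \<le> i \<and> i \<le> N \<and> 1 \<le> j \<and> j \<le> N"
        and ag: "\<forall>i' j'. 1 \<le> i' \<and> i' \<le> i \<and> 1 \<le> j' \<and> j' \<le> j \<longrightarrow> y' i' j' = y i' j'"
      have e1: "sd_u Q y' i (j-1) = sd_u Q y i (j-1)" by (rule sd_u_local) (use ag in auto)
      have e2: "sd_u Q y' (i-1) j = sd_u Q y (i-1) j" by (rule sd_u_local) (use ag in auto)
      have e3: "sd_u Q y' (i-1) (j-1) = sd_u Q y (i-1) (j-1)" by (rule sd_u_local) (use ag in force)
      have e4: "y' i j = y i j" using ag ij by auto
      show "sd_q Q y' i j = sd_q Q y i j" unfolding sd_q_def e1 e2 e3 e4 by (rule refl)
    qed
    show "(\<forall>i j. i \<le> N \<and> j \<le> N \<longrightarrow> \<bar>sd_u Q y i j\<bar> \<le> (b - a) / (2 * (2 ^ d - 3))) \<and> (\<forall>i j. 1 \<le> i \<and> i \<le> N \<and> 1 \<le> j \<and> j \<le> N \<longrightarrow>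
            sd_u Q y i j = sd_u Q y i (j - 1) + sd_u Q y (i - 1) j - sd_u Q y (i - 1) (j - 1)
                           + y i j - sd_q Q y i j) \<and> (\<forall>i j. 1 \<le> i \<and> i \<le> N \<and> 1 \<le> j \<and> j \<le> N \<longrightarrow>
            (\<forall>y' :: nat \<Rightarrow> nat \<Rightarrow> real.
               (\<forall>i' j'. 1 \<le> i' \<and> i' \<le> i \<and> 1 \<le> j' \<and> j' \<le> j \<longrightarrow> y' i' j' = y i' j') \<longrightarrow>
               sd_q Q y' i j = sd_q Q y i j))"
      using P1 P2 P3 by blast
  qed
qed

end
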